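(* Let $n_1,n_2$ be positive integers. Fix $L\in\mathbb{R}^{n_1\times n_2}$ of rank $r$, a basis matrix $G\in\mathbb{R}^{n_1\times r_G}$ with $L_{\mathrm{new}}:=(I-GG^\top)L$ of rank less than $r$, and a matrix $S_0\in\mathbb{R}^{n_1\times n_2}$ with all entries nonzero. For a random subset $\Omega$ of $\{1,\dots,n_1\}\times\{1,\dots,n_2\}$, let $S=\mathcal P_\Omega S_0$, $M=L+S$, and let "Success" be the event that $(L_{\mathrm{new}},S,L^\top G)$ is the unique solution of $$\min_{\tilde L_{\mathrm{new}},\tilde S,\tilde X}\|\tilde L_{\mathrm{new}}\|_*+\lambda\|\tilde S\|_1\ \text{ s.t. }\ \tilde L_{\mathrm{new}}+G\tilde X^\top+\tilde S=M.$$ If $m_1<m_2<n_1n_2$, then $\mathbb{P}_{\mathrm{Unif}(m_1)}(\mathrm{Success})\ge\mathbb{P}_{\mathrm{Unif}(m_2)}(\mathrm{Success})$.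
   Context: $\mathcal P_\Omega S_0$ keeps the entries of $S_0$ indexed by $\Omega$ and zeroes the rest. $\mathbb{P}_{\mathrm{Unif}(m)}$ is probability when $\Omega$ is uniformly distributed among all index subsets of size $m$. A basis matrix satisfies $G^\top G=I$. $\lambda>0$ is fixed; the variables range over $\tilde L_{\mathrm{new}},\tilde S\in\mathbb{R}^{n_1\times n_2}$, $\tilde X\in\mathbb{R}^{n_2\times r_G}$. *)

theory Defs
  imports "HOL-Probability.Probability_Mass_Function"
          "HOL-Computational_Algebra.Polynomial"
          "Jordan_Normal_Form.DL_Rank"
          "Jordan_Normal_Form.Char_Poly"
begin

definition mrank :: "real mat \<Rightarrow> nat" where
  "mrank A = vec_space.rank (dim_row A) A"

text \<open>Singular values of A: the square roots of the eigenvalues of A^T A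
  (counted with algebraic multiplicity, i.e. the real roots of its characteristic
  polynomial; A^T A is symmetric positive semidefinite, so all its eigenvalues are
  real and nonnegative).\<close>
definition singular_values :: "real mat \<Rightarrow> real multiset" where
  "singular_values A = image_mset sqrt (proots (char_poly (transpose_mat A * A)))"

definition nuclear_norm :: "real mat \<Rightarrow> real" where
  "nuclear_norm A = sum_mset (singular_values A)"

definition l1_norm :: "real mat \<Rightarrow> real" where
  "l1_norm A = (\<Sum>i<dim_row A. \<Sum>j<dim_col A. \<bar>A $$ (i,j)\<bar>)"

definition proj_Omega :: "(nat \<times> nat) set \<Rightarrow> real mat \<Rightarrow> real mat" where
  "proj_Omega \<Omega> S0 = mat (dim_row S0) (dim_col S0)
      (\<lambda>(i,j). if (i,j) \<in> \<Omega> then S0 $$ (i,j) else 0)"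

definition index_subsets :: "nat \<Rightarrow> nat \<Rightarrow> nat \<Rightarrow> (nat \<times> nat) set set" where
  "index_subsets n1 n2 m = {\<Omega>. \<Omega> \<subseteq> {0..<n1} \<times> {0..<n2} \<and> card \<Omega> = m}"

definition prob_unif :: "nat \<Rightarrow> nat \<Rightarrow> nat \<Rightarrow> ((nat \<times> nat) set \<Rightarrow> bool) \<Rightarrow> real" where
  "prob_unif n1 n2 m E = measure_pmf.prob (pmf_of_set (index_subsets n1 n2 m)) {\<Omega>. E \<Omega>}"

definition objective :: "real \<Rightarrow> real mat \<Rightarrow> real mat \<Rightarrow> real" where
  "objective lam Lt Sm = nuclear_norm Lt + lam * l1_norm Sm"

definition feasible :: "nat \<Rightarrow> nat \<Rightarrow> nat \<Rightarrow> real mat \<Rightarrow> real mat \<Rightarrow> real mat \<Rightarrow> real mat \<Rightarrow> real mat \<Rightarrow> bool" where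
  "feasible n1 n2 rG G M Lt Sm X \<longleftrightarrow>
     Lt \<in> carrier_mat n1 n2 \<and> Sm \<in> carrier_mat n1 n2 \<and> X \<in> carrier_mat n2 rG \<and>
     Lt + G * transpose_mat X + Sm = M"

definition unique_solution :: "nat \<Rightarrow> nat \<Rightarrow> nat \<Rightarrow> real \<Rightarrow> real mat \<Rightarrow> real mat \<Rightarrow> real mat \<Rightarrow> real mat \<Rightarrow> real mat \<Rightarrow> bool" where
  "unique_solution n1 n2 rG lam G M Lt Sm X \<longleftrightarrow>
     feasible n1 n2 rG G M Lt Sm X \<and>
     (\<forall>Lt' Sm' X'. feasible n1 n2 rG G M Lt' Sm' X' \<and> (Lt', Sm', X') \<noteq> (Lt, Sm, X) \<longrightarrow>
        objective lam Lt Sm < objective lam Lt' Sm')"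

definition success :: "nat \<Rightarrow> nat \<Rightarrow> nat \<Rightarrow> real \<Rightarrow> real mat \<Rightarrow> real mat \<Rightarrow> real mat \<Rightarrow> (nat \<times> nat) set \<Rightarrow> bool" where
  "success n1 n2 rG lam L G S0 \<Omega> \<longleftrightarrow>
     (let Lnew = (1\<^sub>m n1 - G * transpose_mat G) * L;
          S = proj_Omega \<Omega> S0;
          M = L + S
      in unique_solution n1 n2 rG lam G M Lnew S (transpose_mat L * G))"

end

theory Submission
  imports Defs
begin

lemma count_step:
  fixes U :: "'a set" and E :: "'a set \<Rightarrow> bool"
  assumes fin: "finite U" and down: "\<And>A B. B \<subseteq> U \<Longrightarrow> E B \<Longrightarrow> A \<subseteq> B \<Longrightarrow> E A"
    and m: "Suc m \<le> card U"
  shows "card {B. B \<subseteq> U \<and> card B = Suc m \<and> E B} * Suc m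
         \<le> card {A. A \<subseteq> U \<and> card A = m \<and> E A} * (card U - m)"
proof -
  define Am where "Am = {A. A \<subseteq> U \<and> card A = m \<and> E A}"
  define Am1 where "Am1 = {B. B \<subseteq> U \<and> card B = Suc m \<and> E B}"
  have fAm: "finite Am" unfolding Am_def
    by (rule rev_finite_subset[of "Pow U"]) (use fin in auto)
  have fAm1: "finite Am1" unfolding Am1_def
    by (rule rev_finite_subset[of "Pow U"]) (use fin in auto)
  define P where "P = {(A,B). A \<in> Am \<and> B \<in> Am1 \<and> A \<subseteq> B}"
  have P1: "P = Sigma Am (\<lambda>A. {B \<in> Am1. A \<subseteq> B})" unfolding P_def by auto
  have P2: "P = (\<lambda>(B,A). (A,B)) ` Sigma Am1 (\<lambda>B. {A \<in> Am. A \<subseteq> B})"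
    unfolding P_def by auto
  have "card P = (\<Sum>A\<in>Am. card {B \<in> Am1. A \<subseteq> B})"
    unfolding P1 by (rule card_SigmaI) (use fAm fAm1 in auto)
  also have "\<dots> \<le> (\<Sum>A\<in>Am. card U - m)"
  proof (rule sum_mono)
    fix A assume A: "A \<in> Am"
    hence AU: "A \<subseteq> U" and cA: "card A = m" unfolding Am_def by auto
    have fA: "finite A" using AU fin finite_subset by blast
    have "{B \<in> Am1. A \<subseteq> B} \<subseteq> (\<lambda>x. insert x A) ` (U - A)"
    proof
      fix B assume B: "B \<in> {B \<in> Am1. A \<subseteq> B}"
      hence BU: "B \<subseteq> U" and cB: "card B = Suc m" and AB: "A \<subseteq> B" unfolding Am1_def by auto
      have fB: "finite B" using BU fin finite_subset by blast
      have "B - A \<noteq> {}" using AB cA cB by (metis Diff_eq_empty_iff n_not_Suc_n subset_antisym)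
      then obtain x where x: "x \<in> B" "x \<notin> A" by blast
      have "insert x A \<subseteq> B" using x AB by auto
      moreover have "card (insert x A) = card B" using x fA cA cB by simp
      ultimately have "insert x A = B" using fB card_subset_eq by blast
      thus "B \<in> (\<lambda>x. insert x A) ` (U - A)" using x BU by auto
    qed
    hence "card {B \<in> Am1. A \<subseteq> B} \<le> card ((\<lambda>x. insert x A) ` (U - A))"
      by (rule card_mono[rotated]) (use fin in auto)
    also have "\<dots> \<le> card (U - A)" by (rule card_image_le) (use fin in auto)
    also have "\<dots> = card U - m" using AU fA cA by (simp add: card_Diff_subset)
    finally show "card {B \<in> Am1. A \<subseteq> B} \<le> card U - m" .
  qed
  also have "\<dots> = card Am * (card U - m)" by simp
  finally have up: "card P \<le> card Am * (card U - m)" .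
  have "card P = card (Sigma Am1 (\<lambda>B. {A \<in> Am. A \<subseteq> B}))"
    unfolding P2 by (rule card_image) (auto simp: inj_on_def)
  also have "\<dots> = (\<Sum>B\<in>Am1. card {A \<in> Am. A \<subseteq> B})"
    by (rule card_SigmaI) (use fAm fAm1 in auto)
  finally have eqP: "card P = (\<Sum>B\<in>Am1. card {A \<in> Am. A \<subseteq> B})" .
  have "(\<Sum>B\<in>Am1. Suc m) \<le> (\<Sum>B\<in>Am1. card {A \<in> Am. A \<subseteq> B})"
  proof (rule sum_mono)
    fix B assume B: "B \<in> Am1"
    hence BU: "B \<subseteq> U" and cB: "card B = Suc m" and EB: "E B" unfolding Am1_def by auto
    have fB: "finite B" using BU fin finite_subset by blast
    have sub: "(\<lambda>x. B - {x}) ` B \<subseteq> {A \<in> Am. A \<subseteq> B}"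
    proof
      fix A assume "A \<in> (\<lambda>x. B - {x}) ` B"
      then obtain x where x: "x \<in> B" "A = B - {x}" by blast
      have "card A = m" using x cB fB by simp
      moreover have "E A" using down[OF BU EB] x by auto
      ultimately show "A \<in> {A \<in> Am. A \<subseteq> B}" using x BU unfolding Am_def by auto
    qed
    have inj: "inj_on (\<lambda>x. B - {x}) B" by (auto simp: inj_on_def)
    have "Suc m = card ((\<lambda>x. B - {x}) ` B)" using card_image[OF inj] cB by simp
    also have "\<dots> \<le> card {A \<in> Am. A \<subseteq> B}" by (rule card_mono[OF _ sub]) (use fAm in auto)
    finally show "Suc m \<le> card {A \<in> Am. A \<subseteq> B}" .
  qed
  hence "card Am1 * Suc m \<le> card P" using eqP by simp
  with up show ?thesis unfolding Am_def Am1_def by simp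
qed

lemma ratio_step:
  fixes U :: "'a set" and E :: "'a set \<Rightarrow> bool"
  assumes fin: "finite U" and down: "\<And>A B. B \<subseteq> U \<Longrightarrow> E B \<Longrightarrow> A \<subseteq> B \<Longrightarrow> E A"
    and m: "Suc m \<le> card U"
  shows "real (card {B. B \<subseteq> U \<and> card B = Suc m \<and> E B}) / real (card U choose Suc m)
         \<le> real (card {A. A \<subseteq> U \<and> card A = m \<and> E A}) / real (card U choose m)"
proof -
  define a where "a = card {A. A \<subseteq> U \<and> card A = m \<and> E A}"
  define b where "b = card {B. B \<subseteq> U \<and> card B = Suc m \<and> E B}"
  define N where "N = card U"
  have ba: "b * Suc m \<le> a * (N - m)" using count_step[OF fin down m] unfolding a_def b_def N_def .
  have bin: "Suc m * (N choose Suc m) = (N - m) * (N choose m)"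
    using binomial_absorption[of m N] binomial_absorb_comp[of N m] by simp
  have c: "N choose m > 0" "N choose Suc m > 0" using m unfolding N_def by auto
  have "b * (N choose m) * Suc m \<le> a * (N choose Suc m) * Suc m"
  proof -
    have "b * (N choose m) * Suc m = (b * Suc m) * (N choose m)" by (simp only: mult_ac)
    also have "\<dots> \<le> (a * (N - m)) * (N choose m)" using ba by simp
    also have "\<dots> = a * ((N - m) * (N choose m))" by simp
    also have "\<dots> = a * (N choose Suc m) * Suc m" by (metis bin mult.assoc mult.commute)
    finally show ?thesis .
  qed
  hence "b * (N choose m) \<le> a * (N choose Suc m)" using mult_le_cancel2[of _ "Suc m"] by (metis zero_less_Suc)
  hence "real b * real (N choose m) \<le> real a * real (N choose Suc m)"
    by (metis of_nat_le_iff of_nat_mult)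
  hence "real b / real (N choose Suc m) \<le> real a / real (N choose m)"
    using c by (simp add: divide_simps)
  thus ?thesis unfolding a_def b_def N_def .
qed

lemma ratio_mono:
  fixes U :: "'a set" and E :: "'a set \<Rightarrow> bool"
  assumes fin: "finite U" and down: "\<And>A B. B \<subseteq> U \<Longrightarrow> E B \<Longrightarrow> A \<subseteq> B \<Longrightarrow> E A"
  shows "m + d \<le> card U \<Longrightarrow>
         real (card {B. B \<subseteq> U \<and> card B = m + d \<and> E B}) / real (card U choose (m + d))
         \<le> real (card {A. A \<subseteq> U \<and> card A = m \<and> E A}) / real (card U choose m)"
proof (induction d)
  case 0 thus ?case by simp
next
  case (Suc d)
  have "real (card {B. B \<subseteq> U \<and> card B = Suc (m + d) \<and> E B}) / real (card U choose Suc (m + d))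
     \<le> real (card {B. B \<subseteq> U \<and> card B = m + d \<and> E B}) / real (card U choose (m + d))"
    by (rule ratio_step[OF fin down]) (use Suc in auto)
  also have "\<dots> \<le> real (card {A. A \<subseteq> U \<and> card A = m \<and> E A}) / real (card U choose m)"
    using Suc by simp
  finally show ?case by simp
qed

lemma proj_carrier: "S0 \<in> carrier_mat n1 n2 \<Longrightarrow> proj_Omega \<Omega> S0 \<in> carrier_mat n1 n2"
  by (auto simp: proj_Omega_def)

lemma proj_index: "S0 \<in> carrier_mat n1 n2 \<Longrightarrow> i < n1 \<Longrightarrow> j < n2 \<Longrightarrow>
  proj_Omega \<Omega> S0 $$ (i,j) = (if (i,j) \<in> \<Omega> then S0 $$ (i,j) else 0)"
  by (auto simp: proj_Omega_def)

lemma l1_add_le: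
  assumes "A \<in> carrier_mat n1 n2" "B \<in> carrier_mat n1 n2"
  shows "l1_norm (A + B) \<le> l1_norm A + l1_norm B"
proof -
  have "l1_norm (A + B) = (\<Sum>i<n1. \<Sum>j<n2. \<bar>A $$ (i,j) + B $$ (i,j)\<bar>)"
    using assms by (simp add: l1_norm_def)
  also have "\<dots> \<le> (\<Sum>i<n1. \<Sum>j<n2. \<bar>A $$ (i,j)\<bar> + \<bar>B $$ (i,j)\<bar>)"
    by (intro sum_mono abs_triangle_ineq)
  also have "\<dots> = l1_norm A + l1_norm B"
    using assms by (simp add: l1_norm_def sum.distrib)
  finally show ?thesis .
qed

lemma l1_split:
  assumes "S0 \<in> carrier_mat n1 n2" "\<Omega>' \<subseteq> \<Omega>"
  shows "l1_norm (proj_Omega \<Omega> S0) = l1_norm (proj_Omega \<Omega>' S0) + l1_norm (proj_Omega (\<Omega> - \<Omega>') S0)"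
proof -
  have "l1_norm (proj_Omega \<Omega> S0) = (\<Sum>i<n1. \<Sum>j<n2. \<bar>proj_Omega \<Omega> S0 $$ (i,j)\<bar>)"
    using carrier_matD[OF proj_carrier[OF assms(1)]] by (simp add: l1_norm_def)
  also have "\<dots> = (\<Sum>i<n1. \<Sum>j<n2. \<bar>proj_Omega \<Omega>' S0 $$ (i,j)\<bar> + \<bar>proj_Omega (\<Omega> - \<Omega>') S0 $$ (i,j)\<bar>)"
    by (intro sum.cong refl) (use assms in \<open>auto simp: proj_index\<close>)
  also have "\<dots> = l1_norm (proj_Omega \<Omega>' S0) + l1_norm (proj_Omega (\<Omega> - \<Omega>') S0)"
    using carrier_matD[OF proj_carrier[OF assms(1)]] by (simp add: l1_norm_def sum.distrib)
  finally show ?thesis .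
qed

lemma success_mono:
  assumes cL: "L \<in> carrier_mat n1 n2" and cG: "G \<in> carrier_mat n1 rG"
    and cS0: "S0 \<in> carrier_mat n1 n2" and lam: "lam > 0"
    and suc: "success n1 n2 rG lam L G S0 \<Omega>" and sub: "\<Omega>' \<subseteq> \<Omega>"
  shows "success n1 n2 rG lam L G S0 \<Omega>'"
proof -
  define Lnew where "Lnew = (1\<^sub>m n1 - G * transpose_mat G) * L"
  define X where "X = transpose_mat L * G"
  define S where "S = proj_Omega \<Omega> S0"
  define S' where "S' = proj_Omega \<Omega>' S0"
  define D where "D = proj_Omega (\<Omega> - \<Omega>') S0"
  have cLn: "Lnew \<in> carrier_mat n1 n2" unfolding Lnew_def using cL cG by auto
  have cX: "X \<in> carrier_mat n2 rG" unfolding X_def using cL cG by auto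
  have cGX: "G * transpose_mat X \<in> carrier_mat n1 n2" using cX cG by auto
  have cS: "S \<in> carrier_mat n1 n2" "S' \<in> carrier_mat n1 n2" "D \<in> carrier_mat n1 n2"
    unfolding S_def S'_def D_def using proj_carrier[OF cS0] by auto
  have SD: "\<And>i j. i < n1 \<Longrightarrow> j < n2 \<Longrightarrow> S $$ (i,j) = S' $$ (i,j) + D $$ (i,j)"
    unfolding S_def S'_def D_def using sub by (auto simp: proj_index[OF cS0])
  have l1S: "l1_norm S = l1_norm S' + l1_norm D"
    unfolding S_def S'_def D_def by (rule l1_split[OF cS0 sub])
  have us: "unique_solution n1 n2 rG lam G (L + S) Lnew S X"
    using suc unfolding success_def Let_def Lnew_def[symmetric] S_def[symmetric] X_def[symmetric] .
  hence feq: "Lnew + G * transpose_mat X + S = L + S"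
    and opt: "\<And>Lt' Sm' X'. feasible n1 n2 rG G (L + S) Lt' Sm' X' \<Longrightarrow> (Lt', Sm', X') \<noteq> (Lnew, S, X) \<Longrightarrow>
        objective lam Lnew S < objective lam Lt' Sm'"
    unfolding unique_solution_def feasible_def by blast+
  have key: "\<And>i j. i < n1 \<Longrightarrow> j < n2 \<Longrightarrow> Lnew $$ (i,j) + (G * transpose_mat X) $$ (i,j) = L $$ (i,j)"
  proof -
    fix i j assume ij: "i < n1" "j < n2"
    have "(Lnew + G * transpose_mat X + S) $$ (i,j) = (L + S) $$ (i,j)" using feq by simp
    thus "Lnew $$ (i,j) + (G * transpose_mat X) $$ (i,j) = L $$ (i,j)"
      using ij cLn cGX cS cL by simp
  qed
  have feas': "feasible n1 n2 rG G (L + S') Lnew S' X"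
    unfolding feasible_def
  proof (intro conjI cLn cS cX)
    show "Lnew + G * transpose_mat X + S' = L + S'"
      by (rule eq_matI) (use cLn cGX cS cL key in auto)
  qed
  have "unique_solution n1 n2 rG lam G (L + S') Lnew S' X"
    unfolding unique_solution_def
  proof (intro conjI feas' allI impI)
    fix Lt Sm Xt
    assume H: "feasible n1 n2 rG G (L + S') Lt Sm Xt \<and> (Lt, Sm, Xt) \<noteq> (Lnew, S', X)"
    hence cLt: "Lt \<in> carrier_mat n1 n2" and cSm: "Sm \<in> carrier_mat n1 n2" and cXt: "Xt \<in> carrier_mat n2 rG"
      and eq: "Lt + G * transpose_mat Xt + Sm = L + S'" and ne: "(Lt, Sm, Xt) \<noteq> (Lnew, S', X)"
      unfolding feasible_def by auto
    have cGXt: "G * transpose_mat Xt \<in> carrier_mat n1 n2" using cXt cG by auto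
    have key2: "\<And>i j. i < n1 \<Longrightarrow> j < n2 \<Longrightarrow> Lt $$ (i,j) + (G * transpose_mat Xt) $$ (i,j) + Sm $$ (i,j) = L $$ (i,j) + S' $$ (i,j)"
    proof -
      fix i j assume ij: "i < n1" "j < n2"
      have "(Lt + G * transpose_mat Xt + Sm) $$ (i,j) = (L + S') $$ (i,j)" using eq by simp
      thus "Lt $$ (i,j) + (G * transpose_mat Xt) $$ (i,j) + Sm $$ (i,j) = L $$ (i,j) + S' $$ (i,j)"
        using ij cLt cGXt cSm cS cL by simp
    qed
    have f2: "feasible n1 n2 rG G (L + S) Lt (Sm + D) Xt"
      unfolding feasible_def
    proof (intro conjI cLt cXt)
      show "Sm + D \<in> carrier_mat n1 n2" using cSm cS by auto
      show "Lt + G * transpose_mat Xt + (Sm + D) = L + S"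
      proof (rule eq_matI)
        fix i j assume ij: "i < dim_row (L + S)" "j < dim_col (L + S)"
        hence ij': "i < n1" "j < n2" using cL cS by auto
        show "(Lt + G * transpose_mat Xt + (Sm + D)) $$ (i, j) = (L + S) $$ (i, j)"
          using ij' cLt cGXt cSm cS cL key2[OF ij'] SD[OF ij'] by simp
      qed (use cLt cGXt cSm cS cL in auto)
    qed
    have ne2: "(Lt, Sm + D, Xt) \<noteq> (Lnew, S, X)"
    proof
      assume E: "(Lt, Sm + D, Xt) = (Lnew, S, X)"
      have "Sm = S'"
      proof (rule eq_matI)
        fix i j assume ij: "i < dim_row S'" "j < dim_col S'"
        hence ij': "i < n1" "j < n2" using cS by auto
        have "(Sm + D) $$ (i,j) = S $$ (i,j)" using E by simp
        thus "Sm $$ (i,j) = S' $$ (i,j)" using ij' cSm cS SD[OF ij'] by simp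
      qed (use cSm cS in auto)
      thus False using E ne by simp
    qed
    have "objective lam Lnew S < objective lam Lt (Sm + D)" by (rule opt[OF f2 ne2])
    hence "nuclear_norm Lnew + lam * (l1_norm S' + l1_norm D) < nuclear_norm Lt + lam * l1_norm (Sm + D)"
      unfolding objective_def l1S .
    moreover have "lam * l1_norm (Sm + D) \<le> lam * (l1_norm Sm + l1_norm D)"
      using l1_add_le[OF cSm cS(3)] lam by (simp add: mult_left_mono)
    ultimately show "objective lam Lnew S' < objective lam Lt Sm"
      unfolding objective_def by (simp add: algebra_simps)
  qed
  thus ?thesis unfolding success_def Let_def Lnew_def[symmetric] S'_def[symmetric] X_def[symmetric] .
qed

theorem proposition2:
  fixes n1 n2 r rG m1 m2 :: nat and lam :: real and L G S0 :: "real mat"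
  assumes "n1 > 0" "n2 > 0"
    and "lam > 0"
    and "L \<in> carrier_mat n1 n2" "mrank L = r"
    and "G \<in> carrier_mat n1 rG" "transpose_mat G * G = 1\<^sub>m rG"
    and "mrank ((1\<^sub>m n1 - G * transpose_mat G) * L) < r"
    and "S0 \<in> carrier_mat n1 n2" "\<forall>i<n1. \<forall>j<n2. S0 $$ (i,j) \<noteq> 0"
    and "m1 < m2" "m2 < n1 * n2"
  shows "prob_unif n1 n2 m1 (success n1 n2 rG lam L G S0)
           \<ge> prob_unif n1 n2 m2 (success n1 n2 rG lam L G S0)"
proof -
  define U where "U = {0..<n1} \<times> {0..<n2}"
  define E where "E = success n1 n2 rG lam L G S0"
  have fin: "finite U" unfolding U_def by simp
  have cU: "card U = n1 * n2" unfolding U_def by (simp add: card_cartesian_product)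
  have down: "\<And>A B. B \<subseteq> U \<Longrightarrow> E B \<Longrightarrow> A \<subseteq> B \<Longrightarrow> E A"
    unfolding E_def using success_mono assms(3,4,6,9) by blast
  have pu: "prob_unif n1 n2 m E = real (card {A. A \<subseteq> U \<and> card A = m \<and> E A}) / real (card U choose m)"
    if "m \<le> card U" for m
  proof -
    have I: "index_subsets n1 n2 m = {A. A \<subseteq> U \<and> card A = m}" unfolding index_subsets_def U_def by simp
    have cI: "card (index_subsets n1 n2 m) = card U choose m" unfolding I using n_subsets[OF fin] .
    have fI: "finite (index_subsets n1 n2 m)" unfolding I
      by (rule rev_finite_subset[of "Pow U"]) (use fin in auto)
    have neI: "index_subsets n1 n2 m \<noteq> {}"
      using cI that by (metis card.empty zero_less_binomial_iff less_nat_zero_code)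
    have "prob_unif n1 n2 m E = real (card (index_subsets n1 n2 m \<inter> {A. E A})) / real (card (index_subsets n1 n2 m))"
      unfolding prob_unif_def using measure_pmf_of_set[OF neI fI] by simp
    also have "index_subsets n1 n2 m \<inter> {A. E A} = {A. A \<subseteq> U \<and> card A = m \<and> E A}" unfolding I by auto
    finally show ?thesis unfolding cI .
  qed
  obtain d where d: "m2 = m1 + d" using assms(11) less_imp_add_positive by blast
  have "prob_unif n1 n2 m2 E \<le> prob_unif n1 n2 m1 E"
    using pu[of m1] pu[of m2] ratio_mono[OF fin down, where m=m1 and d=d] d assms(11,12) cU by simp
  thus ?thesis unfolding E_def .
qed

end
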